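(* Every $\sigma$-scattered metrizable space is a $\Delta$-space.
   Context: A space is $\sigma$-scattered if it is a countable union of scattered subspaces (a space is scattered if every nonempty subset has a point isolated in that subset). A topological space $X$ is a $\Delta$-space if for every decreasing sequence $\{D_n:n\in\omega\}$ of subsets of $X$ with $\bigcap_n D_n=\emptyset$ there is a decreasing sequence $\{V_n:n\in\omega\}$ of open subsets of $X$ with $D_n\subseteq V_n$ for all $n$ and $\bigcap_n V_n=\emptyset$. *)

theory Defs
  imports "HOL-Analysis.Analysis"
begin

definition scattered_space :: "'a topology \<Rightarrow> bool" where
  "scattered_space X \<longleftrightarrow>
     (\<forall>T. T \<subseteq> topspace X \<and> T \<noteq> {} \<longrightarrow>
        (\<exists>x\<in>T. \<exists>U. openin X U \<and> U \<inter> T = {x}))"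

definition sigma_scattered :: "'a topology \<Rightarrow> bool" where
  "sigma_scattered X \<longleftrightarrow>
     (\<exists>A :: nat \<Rightarrow> 'a set. topspace X = (\<Union>n. A n) \<and>
        (\<forall>n. scattered_space (subtopology X (A n))))"

definition delta_space :: "'a topology \<Rightarrow> bool" where
  "delta_space X \<longleftrightarrow>
     (\<forall>D :: nat \<Rightarrow> 'a set.
        (\<forall>n. D n \<subseteq> topspace X) \<and> (\<forall>n. D (Suc n) \<subseteq> D n) \<and> (\<Inter>n. D n) = {} \<longrightarrow>
        (\<exists>V :: nat \<Rightarrow> 'a set. (\<forall>n. openin X (V n)) \<and> (\<forall>n. V (Suc n) \<subseteq> V n) \<and>
           (\<forall>n. D n \<subseteq> V n) \<and> (\<Inter>n. V n) = {}))"

end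

theory Submission
  imports Defs
begin

lemma scattered_rel:
  assumes sc: "\<And>T. T \<subseteq> A \<Longrightarrow> T \<noteq> {} \<Longrightarrow> (\<exists>x\<in>T. \<exists>U. openin X U \<and> U \<inter> T = {x})"
  shows "\<exists>R. (\<forall>x z. (z,x)\<in>R \<longrightarrow> (x,z)\<in>R \<longrightarrow> z = x) \<and>
             (\<forall>x\<in>A. \<exists>U. openin X U \<and> x \<in> U \<and> (\<forall>z\<in>U\<inter>A. (z,x) \<in> R))"
proof -
  define P1 where "P1 = (\<lambda>S::('a\<times>'a) set. S \<subseteq> A \<times> A)"
  define P2 where "P2 = (\<lambda>S::('a\<times>'a) set. \<forall>z x. (z,x)\<in>S \<longrightarrow> (z,z)\<in>S \<and> (x,x)\<in>S)"
  define P3 where "P3 = (\<lambda>S::('a\<times>'a) set. \<forall>x z. (z,x)\<in>S \<longrightarrow> (x,z)\<in>S \<longrightarrow> z = x)"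
  define P4 where "P4 = (\<lambda>S::('a\<times>'a) set. \<forall>x. (x,x)\<in>S \<longrightarrow> (\<exists>U. openin X U \<and> x \<in> U \<and> (\<forall>z\<in>U\<inter>A. (z,x) \<in> S)))"
  define F where "F = {S. P1 S \<and> P2 S \<and> P3 S \<and> P4 S}"
  have "\<forall>C\<in>chains F. \<Union>C \<in> F"
  proof
    fix C assume C: "C \<in> chains F"
    hence CF: "C \<subseteq> F" and ch: "\<And>S1 S2. S1 \<in> C \<Longrightarrow> S2 \<in> C \<Longrightarrow> S1 \<subseteq> S2 \<or> S2 \<subseteq> S1"
      unfolding chains_def chain_subset_def by auto
    have CP: "P1 S \<and> P2 S \<and> P3 S \<and> P4 S" if "S \<in> C" for S
      using subsetD[OF CF that] unfolding F_def by simp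
    have 1: "P1 (\<Union>C)" using CP unfolding P1_def by blast
    have 2: "P2 (\<Union>C)" unfolding P2_def
    proof (intro allI impI)
      fix z x assume "(z,x)\<in>\<Union>C"
      then obtain S where "S \<in> C" "(z,x) \<in> S" by blast
      then show "(z,z)\<in>\<Union>C \<and> (x,x)\<in>\<Union>C" using CP[of S] unfolding P2_def by blast
    qed
    have 3: "P3 (\<Union>C)" unfolding P3_def
    proof (intro allI impI)
      fix x z assume "(z,x)\<in>\<Union>C" "(x,z)\<in>\<Union>C"
      then obtain S1 S2 where S: "S1 \<in> C" "S2 \<in> C" "(z,x)\<in>S1" "(x,z)\<in>S2" by blast
      show "z = x"
      proof (cases "S1 \<subseteq> S2")
        case True
        then show ?thesis using S CP[of S2] unfolding P3_def by blast
      next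
        case False
        then have "S2 \<subseteq> S1" using ch[OF S(1,2)] by blast
        then show ?thesis using S CP[of S1] unfolding P3_def by blast
      qed
    qed
    have 4: "P4 (\<Union>C)" unfolding P4_def
    proof (intro allI impI)
      fix x assume "(x,x)\<in>\<Union>C"
      then obtain S where S: "S \<in> C" "(x,x) \<in> S" by blast
      then have "P4 S" using CP by blast
      then obtain U where "openin X U \<and> x \<in> U \<and> (\<forall>z\<in>U\<inter>A. (z,x) \<in> S)"
        using S unfolding P4_def by blast
      then show "\<exists>U. openin X U \<and> x \<in> U \<and> (\<forall>z\<in>U\<inter>A. (z,x) \<in> \<Union>C)" using S by blast
    qed
    show "\<Union>C \<in> F" unfolding F_def using 1 2 3 4 by simp
  qed
  then obtain M where MF: "M \<in> F" and mx: "\<And>S. S\<in>F \<Longrightarrow> M \<subseteq> S \<Longrightarrow> S = M"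
    using Zorn_Lemma[of F] by blast
  have M1: "P1 M" and M2: "P2 M" and M3: "P3 M" and M4: "P4 M" using MF unfolding F_def by simp_all
  define B where "B = {x. (x,x)\<in>M}"
  have AB: "A \<subseteq> B"
  proof (rule ccontr)
    assume "\<not> A \<subseteq> B"
    then have "A - B \<noteq> {}" by blast
    then obtain x U where x: "x \<in> A - B" and U: "openin X U" "U \<inter> (A - B) = {x}"
      using sc[of "A - B"] by blast
    define M' where "M' = M \<union> (insert x B) \<times> {x}"
    have BA: "B \<subseteq> A" using M1 unfolding P1_def B_def by blast
    have 1: "P1 M'" using M1 BA x unfolding P1_def M'_def by blast
    have 2: "P2 M'"
      using M2 unfolding P2_def M'_def B_def by auto
    have 3: "P3 M'"
      using M2 M3 x unfolding P2_def P3_def M'_def B_def by auto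
    have 4: "P4 M'" unfolding P4_def
    proof (intro allI impI)
      fix w assume w: "(w,w)\<in>M'"
      show "\<exists>V. openin X V \<and> w \<in> V \<and> (\<forall>z\<in>V\<inter>A. (z,w) \<in> M')"
      proof (cases "(w,w) \<in> M")
        case True
        then obtain V where "openin X V \<and> w \<in> V \<and> (\<forall>z\<in>V\<inter>A. (z,w) \<in> M)"
          using M4 unfolding P4_def by blast
        then show ?thesis unfolding M'_def by blast
      next
        case False
        hence "w = x" using w unfolding M'_def B_def by blast
        moreover have "\<forall>z\<in>U\<inter>A. (z,x) \<in> M'" using U unfolding M'_def by blast
        ultimately show ?thesis using U by blast
      qed
    qed
    have "M' \<in> F" unfolding F_def using 1 2 3 4 by simp
    moreover have "M \<subseteq> M'" unfolding M'_def by blast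
    ultimately have "M' = M" using mx by blast
    hence "(x,x) \<in> M" unfolding M'_def by blast
    thus False using x unfolding B_def by blast
  qed
  have "\<forall>x\<in>A. \<exists>U. openin X U \<and> x \<in> U \<and> (\<forall>z\<in>U\<inter>A. (z,x) \<in> M)"
    using AB M4 unfolding P4_def B_def by blast
  then show ?thesis using M3 unfolding P3_def by blast
qed


lemma finite_min_pos:
  fixes P :: "nat \<Rightarrow> real \<Rightarrow> bool"
  assumes "\<And>l. l < i \<Longrightarrow> \<exists>a>0. P l a"
    and "\<And>l a b. P l a \<Longrightarrow> 0 < b \<Longrightarrow> b \<le> a \<Longrightarrow> P l b"
  shows "\<exists>a>0. \<forall>l<i. P l a"
  using assms(1)
proof (induction i)
  case 0
  then show ?case by (auto intro: exI[of _ 1])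
next
  case (Suc i)
  then obtain a where a: "a > 0" "\<forall>l<i. P l a" by auto
  obtain b where b: "b > 0" "P i b" using Suc.prems by blast
  have "\<forall>l<Suc i. P l (min a b)"
  proof (intro allI impI)
    fix l assume "l < Suc i"
    then consider "l < i" | "l = i" by linarith
    then show "P l (min a b)"
    proof cases
      case 1
      then show ?thesis using assms(2)[of l a "min a b"] a b by simp
    next
      case 2
      then show ?thesis using assms(2)[of l b "min a b"] a b by simp
    qed
  qed
  then show ?case using a b by (intro exI[of _ "min a b"]) auto
qed

context Metric_space
begin

lemma sep_cover:
  assumes "sigma_scattered mtopology"
  shows "\<exists>T e. M = (\<Union>i. T i) \<and> (\<forall>i::nat. T i \<subseteq> M \<and> e i > (0::real)) \<and>
     (\<forall>i x x'. x\<in>T i \<longrightarrow> x'\<in>T i \<longrightarrow> d x x' < e i \<longrightarrow> x = x')"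
proof -
  obtain A :: "nat \<Rightarrow> 'a set" where MA: "M = (\<Union>n. A n)"
    and sc: "\<And>n. scattered_space (subtopology mtopology (A n))"
    using assms unfolding sigma_scattered_def by auto
  have AM: "A k \<subseteq> M" for k using MA by blast
  have ex: "\<exists>R. (\<forall>x z. (z,x)\<in>R \<longrightarrow> (x,z)\<in>R \<longrightarrow> z = x) \<and>
             (\<forall>x\<in>A k. \<exists>r>0. \<forall>z\<in>A k. d x z < r \<longrightarrow> (z,x) \<in> R)" for k
  proof -
    have sck: "\<forall>T. T \<subseteq> topspace (subtopology mtopology (A k)) \<and> T \<noteq> {} \<longrightarrow>
        (\<exists>x\<in>T. \<exists>U. openin (subtopology mtopology (A k)) U \<and> U \<inter> T = {x})"
      using sc[of k] unfolding scattered_space_def .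
    have iso: "\<exists>x\<in>T. \<exists>U. openin mtopology U \<and> U \<inter> T = {x}" if "T \<subseteq> A k" "T \<noteq> {}" for T
    proof -
      have "T \<subseteq> topspace (subtopology mtopology (A k))" using that AM by auto
      then have "\<exists>x\<in>T. \<exists>U. openin (subtopology mtopology (A k)) U \<and> U \<inter> T = {x}"
        using sck that(2) by simp
      then obtain x U' where x: "x \<in> T" and U': "openin (subtopology mtopology (A k)) U'" "U' \<inter> T = {x}"
        by blast
      then obtain U where U: "openin mtopology U" "U' = U \<inter> A k" unfolding openin_subtopology by blast
      have "U \<inter> T = {x}" using U'(2) U(2) that(1) by blast
      then show ?thesis using x U(1) by blast
    qed
    then obtain R where R: "\<forall>x z. (z,x)\<in>R \<longrightarrow> (x,z)\<in>R \<longrightarrow> z = x"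
      "\<forall>x\<in>A k. \<exists>U. openin mtopology U \<and> x \<in> U \<and> (\<forall>z\<in>U\<inter>A k. (z,x) \<in> R)"
      using scattered_rel[of "A k" mtopology, OF iso] by blast
    have "\<exists>r>0. \<forall>z\<in>A k. d x z < r \<longrightarrow> (z,x) \<in> R" if "x \<in> A k" for x
    proof -
      have "\<exists>U. openin mtopology U \<and> x \<in> U \<and> (\<forall>z\<in>U\<inter>A k. (z,x) \<in> R)"
        using R(2) that by (rule bspec)
      then obtain U where U: "openin mtopology U" "x \<in> U" "\<forall>z\<in>U\<inter>A k. (z,x) \<in> R"
        by (elim exE conjE)
      have "\<exists>r>0. mball x r \<subseteq> U" using U(1) U(2) openin_mtopology by simp
      then obtain r where r: "r > 0" "mball x r \<subseteq> U" by (elim exE conjE)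
      have "\<forall>z\<in>A k. d x z < r \<longrightarrow> (z,x) \<in> R"
      proof (intro ballI impI)
        fix z assume z: "z \<in> A k" "d x z < r"
        then have "z \<in> mball x r" using AM that by auto
        then show "(z,x) \<in> R" using r U z by blast
      qed
      then show ?thesis using r by blast
    qed
    then show ?thesis using R(1) by blast
  qed
  then have "\<forall>k. \<exists>R. (\<forall>x z. (z,x)\<in>R \<longrightarrow> (x,z)\<in>R \<longrightarrow> z = x) \<and>
             (\<forall>x\<in>A k. \<exists>r>0. \<forall>z\<in>A k. d x z < r \<longrightarrow> (z,x) \<in> R)" by blast
  then obtain R where RR: "\<forall>k. (\<forall>x z. (z,x)\<in>R k \<longrightarrow> (x,z)\<in>R k \<longrightarrow> z = x) \<and>
             (\<forall>x\<in>A k. \<exists>r>0. \<forall>z\<in>A k. d x z < r \<longrightarrow> (z,x) \<in> R k)"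
    by (rule choice[THEN exE])
  have R: "\<And>k x z. (z,x)\<in>R k \<Longrightarrow> (x,z)\<in>R k \<Longrightarrow> z = x" using RR by blast
  have "\<forall>k. \<forall>x. \<exists>r. x \<in> A k \<longrightarrow> r > 0 \<and> (\<forall>z\<in>A k. d x z < r \<longrightarrow> (z,x) \<in> R k)"
    using RR by blast
  then have "\<forall>k. \<exists>f. \<forall>x. x \<in> A k \<longrightarrow> f x > 0 \<and> (\<forall>z\<in>A k. d x z < f x \<longrightarrow> (z,x) \<in> R k)"
    by (intro allI choice) blast
  then obtain \<rho> where \<rho>0: "\<forall>k. \<forall>x. x \<in> A k \<longrightarrow> \<rho> k x > 0 \<and> (\<forall>z\<in>A k. d x z < \<rho> k x \<longrightarrow> (z,x) \<in> R k)"
    by (rule choice[THEN exE])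
  have \<rho>: "\<And>k x. x \<in> A k \<Longrightarrow> \<rho> k x > 0 \<and> (\<forall>z\<in>A k. d x z < \<rho> k x \<longrightarrow> (z,x) \<in> R k)"
    using \<rho>0 by blast
  define S where "S = (\<lambda>k n. {x\<in>A k. inverse (real (Suc n)) \<le> \<rho> k x})"
  define T where "T = (\<lambda>i. S (fst (prod_decode i)) (snd (prod_decode i)))"
  define e where "e = (\<lambda>i. inverse (real (Suc (snd (prod_decode i)))))"
  have 1: "M = (\<Union>i. T i)"
  proof
    show "M \<subseteq> (\<Union>i. T i)"
    proof
      fix x assume "x \<in> M"
      then obtain k where k: "x \<in> A k" using MA by blast
      then obtain n where n: "inverse (real (Suc n)) < \<rho> k x" using \<rho> reals_Archimedean by blast
      have "x \<in> T (prod_encode (k,n))" unfolding T_def S_def using k n by simp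
      then show "x \<in> (\<Union>i. T i)" by blast
    qed
    show "(\<Union>i. T i) \<subseteq> M" unfolding T_def S_def using AM by blast
  qed
  have 2: "\<forall>i. T i \<subseteq> M \<and> e i > 0" unfolding T_def S_def e_def using AM by auto
  have 3: "\<forall>i x x'. x\<in>T i \<longrightarrow> x'\<in>T i \<longrightarrow> d x x' < e i \<longrightarrow> x = x'"
  proof (intro allI impI)
    fix i x x' assume a: "x\<in>T i" "x'\<in>T i" "d x x' < e i"
    define k where "k = fst (prod_decode i)"
    have xs: "x \<in> A k" "x' \<in> A k" "e i \<le> \<rho> k x" "e i \<le> \<rho> k x'"
      using a unfolding T_def S_def e_def k_def by auto
    have "(x',x) \<in> R k" using \<rho>[OF xs(1)] xs a by auto
    moreover have "(x,x') \<in> R k" using \<rho>[OF xs(2)] xs a commute[of x x'] by auto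
    ultimately show "x = x'" using R by metis
  qed
  show ?thesis using 1 2 3 by blast
qed


lemma delta_sep:
  assumes MT: "M = (\<Union>i. T i)" and Tsub: "\<And>i::nat. T i \<subseteq> M" and epos: "\<And>i. e i > (0::real)"
    and sep: "\<And>i x x'. x\<in>T i \<Longrightarrow> x'\<in>T i \<Longrightarrow> d x x' < e i \<Longrightarrow> x = x'"
  shows "delta_space mtopology"
proof -
  define ix where "ix x = (LEAST i. x \<in> T i)" for x
  have ixT: "x \<in> T (ix x)" if "x \<in> M" for x
  proof -
    have "\<exists>i. x \<in> T i" using that MT by blast
    then show ?thesis unfolding ix_def by (rule LeastI_ex)
  qed
  have ixmin: "x \<notin> T l" if "l < ix x" for x l
    using that not_less_Least unfolding ix_def by blast
  have away: "\<exists>a>0. \<forall>z\<in>T l. a \<le> d x z" if x: "x \<in> M" "x \<notin> T l" for x l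
  proof (cases "\<exists>z\<in>T l. d x z < e l / 2")
    case True
    then obtain z0 where z0: "z0 \<in> T l" "d x z0 < e l / 2" by blast
    have z0M: "z0 \<in> M" using z0 Tsub by blast
    have dpos: "d x z0 > 0" using mdist_pos_less[of x z0] x z0 z0M by blast
    have "\<forall>z\<in>T l. min (e l / 2) (d x z0) \<le> d x z"
    proof
      fix z assume z: "z \<in> T l"
      have zM: "z \<in> M" using z Tsub by blast
      show "min (e l / 2) (d x z0) \<le> d x z"
      proof (cases "d x z < e l / 2")
        case True
        have "d z0 z \<le> d z0 x + d x z" using triangle[of z0 x z] z0M zM x by blast
        also have "\<dots> < e l" using True z0 commute[of z0 x] by simp
        finally have "z = z0" using sep[OF z z0(1)] commute[of z z0] by simp
        then show ?thesis by simp
      next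
        case False
        then show ?thesis by simp
      qed
    qed
    then show ?thesis using dpos epos[of l] by (intro exI[of _ "min (e l / 2) (d x z0)"]) simp
  next
    case False
    then show ?thesis using epos[of l] by (intro exI[of _ "e l / 2"]) (auto simp: not_less)
  qed
  have rad: "\<exists>r. r > 0 \<and> r \<le> e (ix x) / 2 \<and> (\<forall>l<ix x. \<forall>z\<in>T l. r \<le> d x z)" if x: "x \<in> M" for x
  proof -
    have "\<exists>a>0. \<forall>l<ix x. \<forall>z\<in>T l. a \<le> d x z"
    proof (rule finite_min_pos[where P = "\<lambda>l a. \<forall>z\<in>T l. a \<le> d x z"])
      show "\<exists>a>0. \<forall>z\<in>T l. a \<le> d x z" if "l < ix x" for l
        using away[OF x ixmin[OF that]] .
      show "\<forall>z\<in>T l. b \<le> d x z" if "\<forall>z\<in>T l. a \<le> d x z" "0 < b" "b \<le> a" for l a b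
        using that by force
    qed
    then obtain a where a: "a > 0" "\<forall>l<ix x. \<forall>z\<in>T l. a \<le> d x z" by blast
    have "min a (e (ix x) / 2) > 0" using a epos[of "ix x"] by simp
    moreover have "\<forall>l<ix x. \<forall>z\<in>T l. min a (e (ix x) / 2) \<le> d x z" using a by force
    ultimately show ?thesis by (intro exI[of _ "min a (e (ix x) / 2)"]) simp
  qed
  have "\<forall>x. \<exists>r. x \<in> M \<longrightarrow> r > 0 \<and> r \<le> e (ix x) / 2 \<and> (\<forall>l<ix x. \<forall>z\<in>T l. r \<le> d x z)"
    using rad by blast
  then obtain r where r0: "\<forall>x. x \<in> M \<longrightarrow> r x > 0 \<and> r x \<le> e (ix x) / 2 \<and> (\<forall>l<ix x. \<forall>z\<in>T l. r x \<le> d x z)"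
    by (rule choice[THEN exE])
  have rpos: "r x > 0" and rle: "r x \<le> e (ix x) / 2" and rfar: "\<And>l z. l < ix x \<Longrightarrow> z \<in> T l \<Longrightarrow> r x \<le> d x z"
    if "x \<in> M" for x using r0 that by blast+
  have fin: "finite {x\<in>M. d x y < r x}" if y: "y \<in> M" for y
  proof -
    define P where "P = {x\<in>M. d x y < r x}"
    define g where "g i = (SOME x. x \<in> P \<and> ix x = i)" for i
    have "P \<subseteq> g ` {..ix y}"
    proof
      fix x assume xP: "x \<in> P"
      then have xM: "x \<in> M" and dxy: "d x y < r x" unfolding P_def by auto
      have le: "ix x \<le> ix y"
      proof (rule ccontr)
        assume "\<not> ix x \<le> ix y"
        then have "ix y < ix x" by simp
        then have "r x \<le> d x y" using rfar[OF xM _ ixT[OF y]] by blast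
        then show False using dxy by simp
      qed
      have "\<exists>x'. x' \<in> P \<and> ix x' = ix x" using xP by blast
      then have g: "g (ix x) \<in> P \<and> ix (g (ix x)) = ix x" unfolding g_def by (rule someI_ex)
      define x' where "x' = g (ix x)"
      have x'M: "x' \<in> M" and dx'y: "d x' y < r x'" and ix': "ix x' = ix x"
        using g unfolding x'_def P_def by auto
      have "d x x' \<le> d x y + d y x'" using triangle[of x y x'] xM y x'M by blast
      also have "\<dots> < r x + r x'" using dxy dx'y commute[of y x'] by simp
      also have "\<dots> \<le> e (ix x)" using rle[OF xM] rle[OF x'M] ix' by simp
      finally have "x = x'" using sep[OF ixT[OF xM]] ixT[OF x'M] ix' by simp
      then show "x \<in> g ` {..ix y}" using le unfolding x'_def by blast
    qed
    then show ?thesis unfolding P_def[symmetric] by (rule finite_surj[rotated]) simp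
  qed
  show ?thesis unfolding delta_space_def
  proof (intro allI impI)
    fix D :: "nat \<Rightarrow> 'a set"
    assume "(\<forall>n. D n \<subseteq> topspace mtopology) \<and> (\<forall>n. D (Suc n) \<subseteq> D n) \<and> (\<Inter>n. D n) = {}"
    then have DM: "\<And>n. D n \<subseteq> M" and Ddec: "\<And>n. D (Suc n) \<subseteq> D n" and Demp: "(\<Inter>n. D n) = {}"
      by auto
    have Dmono: "D m \<subseteq> D n" if "n \<le> m" for n m
      using lift_Suc_antimono_le[of D, OF Ddec that] .
    define V where "V n = (\<Union>x\<in>D n. mball x (r x))" for n
    have 1: "\<forall>n. openin mtopology (V n)" unfolding V_def by auto
    have 2: "\<forall>n. V (Suc n) \<subseteq> V n" unfolding V_def using Ddec by blast
    have 3: "\<forall>n. D n \<subseteq> V n"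
    proof (intro allI subsetI)
      fix n x assume "x \<in> D n"
      moreover then have "x \<in> M" using DM by blast
      ultimately show "x \<in> V n" unfolding V_def using rpos by force
    qed
    have 4: "(\<Inter>n. V n) = {}"
    proof (rule ccontr)
      assume "(\<Inter>n. V n) \<noteq> {}"
      then obtain y where yV: "\<And>n. y \<in> V n" by blast
      have yM: "y \<in> M" using yV[of 0] unfolding V_def by auto
      define P where "P = {x\<in>M. d x y < r x}"
      have "finite P" unfolding P_def using fin[OF yM] .
      moreover have "\<forall>x\<in>P. eventually (\<lambda>n. x \<notin> D n) sequentially"
      proof
        fix x assume "x \<in> P"
        obtain n where "x \<notin> D n" using Demp by blast
        then have "\<forall>m\<ge>n. x \<notin> D m" using Dmono by blast
        then show "eventually (\<lambda>n. x \<notin> D n) sequentially" unfolding eventually_sequentially by blast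
      qed
      ultimately have "eventually (\<lambda>n. \<forall>x\<in>P. x \<notin> D n) sequentially"
        by (rule eventually_ball_finite)
      then obtain N where N: "\<forall>x\<in>P. x \<notin> D N" unfolding eventually_sequentially by blast
      obtain x where x: "x \<in> D N" "y \<in> mball x (r x)" using yV[of N] unfolding V_def by blast
      then have "x \<in> P" unfolding P_def by auto
      then show False using N x by blast
    qed
    show "\<exists>V. (\<forall>n. openin mtopology (V n)) \<and> (\<forall>n. V (Suc n) \<subseteq> V n) \<and>
           (\<forall>n. D n \<subseteq> V n) \<and> (\<Inter>n. V n) = {}"
      using 1 2 3 4 by blast
  qed
qed

end

theorem proposition4p1:
  fixes X :: "'a topology"
  assumes "metrizable_space X" and "sigma_scattered X"
  shows "delta_space X"
proof -
  obtain M d where md: "Metric_space M d" and X: "X = Metric_space.mtopology M d"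
    using assms(1) unfolding metrizable_space_def by blast
  interpret Metric_space M d by (rule md)
  have ss: "sigma_scattered mtopology" using assms(2) X by simp
  obtain T e where TM: "M = (\<Union>i. T i)" and Te: "\<forall>i::nat. T i \<subseteq> M \<and> e i > (0::real)"
    and Ts: "\<forall>i x x'. x\<in>T i \<longrightarrow> x'\<in>T i \<longrightarrow> d x x' < e i \<longrightarrow> x = x'"
    using sep_cover[OF ss] by (elim exE conjE)
  have "delta_space mtopology"
  proof (rule delta_sep[of T e])
    show "M = (\<Union>i. T i)" by (rule TM)
    show "T i \<subseteq> M" for i using Te by simp
    show "e i > 0" for i using Te by simp
    show "x = x'" if "x\<in>T i" "x'\<in>T i" "d x x' < e i" for i x x' using Ts that by blast
  qed
  then show ?thesis using X by simp
qed

end
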